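(* For every $n\ge3$, no vertex of the unweighted path $P_n$ is sedentary.
   Context: For a graph with adjacency matrix $A$, $U(t)=e^{itA}$. A vertex $u$ is sedentary if $\inf_{t>0}|U(t)_{u,u}|\ge C$ for some constant $0<C\le1$, and not sedentary if $\inf_{t>0}|U(t)_{u,u}|=0$. *)

theory Defs
  imports "HOL-Analysis.Analysis"
begin

definition path_adj :: "nat \<Rightarrow> nat \<Rightarrow> nat \<Rightarrow> complex" where
  "path_adj n i j = (if i < n \<and> j < n \<and> (i = Suc j \<or> j = Suc i) then 1 else 0)"

fun mat_pow :: "nat \<Rightarrow> (nat \<Rightarrow> nat \<Rightarrow> complex) \<Rightarrow> nat \<Rightarrow> nat \<Rightarrow> nat \<Rightarrow> complex" where
  "mat_pow n A 0 i j = (if i = j then 1 else 0)"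
| "mat_pow n A (Suc k) i j = (\<Sum>l<n. mat_pow n A k i l * A l j)"

definition transition :: "nat \<Rightarrow> (nat \<Rightarrow> nat \<Rightarrow> complex) \<Rightarrow> real \<Rightarrow> nat \<Rightarrow> nat \<Rightarrow> complex" where
  "transition n A t u v = (\<Sum>k. ((\<i> * of_real t) ^ k / of_nat (fact k)) * mat_pow n A k u v)"

definition sedentary :: "nat \<Rightarrow> (nat \<Rightarrow> nat \<Rightarrow> complex) \<Rightarrow> nat \<Rightarrow> bool" where
  "sedentary n A u \<longleftrightarrow> (\<exists>C::real. 0 < C \<and> C \<le> 1 \<and>
      (INF t\<in>{0<..}. norm (transition n A t u u)) \<ge> C)"

end

theory Submission
  imports Defs "HOL-Real_Asymp.Real_Asymp"
begin


definition mean_lim :: "(real \<Rightarrow> real) \<Rightarrow> real \<Rightarrow> bool" where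
  "mean_lim f L \<longleftrightarrow> continuous_on UNIV f \<and>
     ((\<lambda>T. (1/T) * integral {0..T} f) \<longlongrightarrow> L) at_top"

lemma integral_cos_lin:
  fixes T \<mu> :: real
  assumes "T \<ge> 0" "\<mu> \<noteq> 0"
  shows "integral {0..T} (\<lambda>t. cos (t * \<mu>)) = sin (T * \<mu>) / \<mu>"
proof -
  have "((\<lambda>t. sin (t * \<mu>) / \<mu>) has_real_derivative cos (t * \<mu>)) (at t within {0..T})" for t
    using assms by (auto intro!: derivative_eq_intros)
  then have "((\<lambda>t. cos (t * \<mu>)) has_integral (sin (T * \<mu>) / \<mu> - sin (0 * \<mu>) / \<mu>)) {0..T}"
    by (intro fundamental_theorem_of_calculus) (auto simp: has_real_derivative_iff_has_vector_derivative[symmetric] assms)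
  then show ?thesis by (simp add: integral_unique)
qed

lemma mean_lim_cos: "mean_lim (\<lambda>t. cos (t * \<mu>)) (if \<mu> = 0 then 1 else 0)"
  unfolding mean_lim_def
proof (intro conjI)
  show "continuous_on UNIV (\<lambda>t. cos (t * \<mu>))" by (intro continuous_intros)
  show "((\<lambda>T. 1 / T * integral {0..T} (\<lambda>t. cos (t * \<mu>))) \<longlongrightarrow> (if \<mu> = 0 then 1 else 0)) at_top"
  proof (cases "\<mu> = 0")
    case True
    have "\<forall>\<^sub>F T in at_top. 1 / T * integral {0..T} (\<lambda>t. cos (t * \<mu>)) = 1"
      using eventually_gt_at_top[of 0] by eventually_elim (simp add: True)
    then show ?thesis using True by (simp add: tendsto_eventually)
  next
    case False
    have "((\<lambda>x. sin (x * \<mu>) / x) \<longlongrightarrow> 0) at_top"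
      by real_asymp
    from tendsto_mult_right_zero[OF this, of "1/\<mu>"]
    have "((\<lambda>x. sin (x * \<mu>) / \<mu> / x) \<longlongrightarrow> 0) at_top" by simp
    then have "((\<lambda>T. 1 / T * integral {0..T} (\<lambda>t. cos (t * \<mu>))) \<longlongrightarrow> 0) at_top"
      apply (rule tendsto_cong[THEN iffD1, rotated])
      using eventually_gt_at_top[of 0] by eventually_elim (simp add: integral_cos_lin False)
    then show ?thesis using False by simp
  qed
qed

lemma mean_lim_cmult: "mean_lim f L \<Longrightarrow> mean_lim (\<lambda>t. c * f t) (c * L)"
  unfolding mean_lim_def
proof (intro conjI, goal_cases)
  case 1 then show ?case by (auto intro!: continuous_intros)
next
  case 2
  then have "((\<lambda>T. c * (1 / T * integral {0..T} f)) \<longlongrightarrow> c * L) at_top"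
    by (intro tendsto_mult tendsto_const) auto
  moreover have "integrable_on_ok": "\<And>T. f integrable_on {0..T}"
    using 2 by (auto intro: integrable_continuous_interval continuous_on_subset)
  ultimately show ?case
    by (simp add: integral_mult_right mult.left_commute)
qed

lemma mean_lim_sum:
  assumes "finite R" "\<And>r. r \<in> R \<Longrightarrow> mean_lim (f r) (L r)"
  shows "mean_lim (\<lambda>t. \<Sum>r\<in>R. f r t) (\<Sum>r\<in>R. L r)"
  unfolding mean_lim_def
proof (intro conjI)
  show "continuous_on UNIV (\<lambda>t. \<Sum>r\<in>R. f r t)"
    using assms by (intro continuous_on_sum) (auto simp: mean_lim_def)
  have int: "\<And>r T. r \<in> R \<Longrightarrow> f r integrable_on {0..T}"
    using assms by (auto simp: mean_lim_def intro: integrable_continuous_interval continuous_on_subset)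
  have "((\<lambda>T. \<Sum>r\<in>R. 1 / T * integral {0..T} (f r)) \<longlongrightarrow> (\<Sum>r\<in>R. L r)) at_top"
    using assms by (intro tendsto_sum) (auto simp: mean_lim_def)
  moreover have "(\<Sum>r\<in>R. 1 / T * integral {0..T} (f r)) = 1 / T * integral {0..T} (\<lambda>t. \<Sum>r\<in>R. f r t)" for T
    using int assms(1) by (simp add: integral_sum sum_distrib_left)
  ultimately show "((\<lambda>T. 1 / T * integral {0..T} (\<lambda>t. \<Sum>r\<in>R. f r t)) \<longlongrightarrow> (\<Sum>r\<in>R. L r)) at_top"
    by simp
qed

lemma mean_lim_nonneg:
  assumes "mean_lim f L" "\<And>t. t \<ge> 0 \<Longrightarrow> f t \<ge> 0"
  shows "L \<ge> 0"
proof -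
  have lim: "((\<lambda>T. (1/T) * integral {0..T} f) \<longlongrightarrow> L) at_top"
    using assms by (simp add: mean_lim_def)
  have "\<forall>\<^sub>F T in at_top. 0 \<le> (1/T) * integral {0..T} f"
    using eventually_gt_at_top[of 0]
  proof eventually_elim
    case (elim T)
    have "f integrable_on {0..T}"
      using assms by (auto simp: mean_lim_def intro: integrable_continuous_interval continuous_on_subset)
    then have "0 \<le> integral {0..T} f"
      using assms(2) by (intro integral_nonneg) auto
    then show ?case using elim by simp
  qed
  then show ?thesis using lim by (intro tendsto_lowerbound) auto
qed

lemma mean_lim_add: "mean_lim f L1 \<Longrightarrow> mean_lim g L2 \<Longrightarrow> mean_lim (\<lambda>t. f t + g t) (L1 + L2)"
  using mean_lim_sum[of "{True, False}" "\<lambda>b. if b then f else g" "\<lambda>b. if b then L1 else L2"]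
  by simp

lemma mean_lim_diff: "mean_lim f L1 \<Longrightarrow> mean_lim g L2 \<Longrightarrow> mean_lim (\<lambda>t. f t - g t) (L1 - L2)"
  using mean_lim_add[of f L1 "\<lambda>t. (-1) * g t" "(-1) * L2"] mean_lim_cmult[of g L2 "-1"]
  by simp

lemma fejer_nonneg:
  "0 \<le> (\<Sum>m\<le>M. \<Sum>m'\<le>M. (-1)^(m+m') * cos (t * ((real m - real m') * x)))"
proof -
  have "(\<Sum>m\<le>M. \<Sum>m'\<le>M. (-1)^(m+m') * cos (t * ((real m - real m') * x)))
     = (\<Sum>m\<le>M. \<Sum>m'\<le>M. ((-1)^m * cos (t * real m * x)) * ((-1)^m' * cos (t * real m' * x))
           + ((-1)^m * sin (t * real m * x)) * ((-1)^m' * sin (t * real m' * x)))"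
  proof (intro sum.cong refl)
    fix m m'
    have "t * ((real m - real m') * x) = t * real m * x - t * real m' * x"
      by (simp add: algebra_simps)
    then show "(-1)^(m+m') * cos (t * ((real m - real m') * x)) =
      ((-1)^m * cos (t * real m * x)) * ((-1)^m' * cos (t * real m' * x))
           + ((-1)^m * sin (t * real m * x)) * ((-1)^m' * sin (t * real m' * x))"
      by (simp add: cos_diff power_add algebra_simps)
  qed
  also have "\<dots> = (\<Sum>m\<le>M. (-1)^m * cos (t * real m * x))\<^sup>2 + (\<Sum>m\<le>M. (-1)^m * sin (t * real m * x))\<^sup>2"
    by (simp add: power2_eq_square sum_product sum.distrib)
  also have "\<dots> \<ge> 0" by simp
  finally show ?thesis by simp
qed

definition Zc :: "nat \<Rightarrow> real \<Rightarrow> real" where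
  "Zc M e = (\<Sum>m\<le>M. \<Sum>m'\<le>M. (-1)^(m+m') * (if real m - real m' = e then 1 else 0))"

lemma Zc_0: "Zc M 0 = real M + 1"
proof -
  have "Zc M 0 = (\<Sum>m\<le>M. (1::real))"
    unfolding Zc_def
  proof (intro sum.cong refl)
    fix m assume "m \<in> {..M}"
    have "(\<Sum>m'\<le>M. (-1::real)^(m+m') * (if real m - real m' = 0 then 1 else 0))
        = (\<Sum>m'\<le>M. if m' = m then (-1::real)^(m+m) else 0)"
      by (intro sum.cong refl) auto
    also have "\<dots> = 1" using \<open>m \<in> {..M}\<close> by (simp add: sum.delta' power_add)
    finally show "(\<Sum>m'\<le>M. (-1::real)^(m+m') * (if real m - real m' = 0 then 1 else 0)) = 1" .
  qed
  then show ?thesis by simp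
qed

lemma Zc_1: "Zc M 1 = - real M"
proof -
  have "Zc M 1 = (\<Sum>m\<le>M. (if 1 \<le> m then -1 else 0::real))"
    unfolding Zc_def
  proof (intro sum.cong refl)
    fix m assume m: "m \<in> {..M}"
    have "(\<Sum>m'\<le>M. (-1::real)^(m+m') * (if real m - real m' = 1 then 1 else 0))
        = (\<Sum>m'\<le>M. if m' = m - 1 \<and> 1 \<le> m then (-1::real)^(m+(m-1)) else 0)"
      by (intro sum.cong refl) auto
    also have "\<dots> = (if 1 \<le> m then -1 else 0)"
    proof (cases "1 \<le> m")
      case True
      then have "(-1::real)^(m+(m-1)) = -1"
      proof -
        obtain q where "m = Suc q" using True by (cases m) auto
        then show ?thesis by (simp add: power_add)
      qed
      then show ?thesis using True m by (simp add: sum.delta')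
    qed simp
    finally show "(\<Sum>m'\<le>M. (-1::real)^(m+m') * (if real m - real m' = 1 then 1 else 0)) = (if 1 \<le> m then -1 else 0)" .
  qed
  also have "\<dots> = - real (card {1..M})"
  proof -
    have "{..M} \<inter> {m. 1 \<le> m} = {1..M}" by auto
    then show ?thesis by (simp add: sum.If_cases)
  qed
  finally show ?thesis by simp
qed

lemma Zc_neg: "Zc M (-e) = Zc M e"
proof -
  have "Zc M (-e) = (\<Sum>m\<le>M. \<Sum>m'\<le>M. (-1)^(m'+m) * (if real m' - real m = e then 1 else 0))"
    unfolding Zc_def
  proof (intro sum.cong refl)
    fix m m'
    have "(real m - real m' = - e) = (real m' - real m = e)" by linarith
    then show "(-1::real)^(m+m') * (if real m - real m' = - e then 1 else 0) =
       (-1)^(m'+m) * (if real m' - real m = e then 1 else 0)" by (simp add: add.commute)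
  qed
  also have "\<dots> = Zc M e"
    unfolding Zc_def by (rule sum.swap)
  finally show ?thesis .
qed

lemma Zc_none: "(\<And>m m'. real m - real m' \<noteq> e) \<Longrightarrow> Zc M e = 0"
  unfolding Zc_def by simp


lemma cos_prod_split: 
  fixes t a d l :: real
  shows "cos (t * a) * cos (t * (d * l)) = (cos (t * (a - d * l)) + cos (t * (a + d * l))) / 2"
  by (simp add: cos_times_cos right_diff_distrib distrib_left)

lemma key:
  fixes K :: "nat set" and w lam :: "nat \<Rightarrow> real" and j j' :: nat and S :: real
  assumes fin: "finite K" and jK: "j \<in> K" and j'K: "j' \<in> K" and jj': "j \<noteq> j'"
    and lj1: "lam j \<ge> 1" and lj': "lam j' = - lam j" and wj': "w j' = w j"
    and inj: "inj_on lam K" and bound: "\<forall>k\<in>K. \<bar>lam k\<bar> < 2"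
    and C0le: "(\<Sum>k\<in>K. if lam k = 0 then w k else 0) \<le> 2 * w j"
    and Spos: "S > 0" and gS: "\<forall>t\<ge>0. S \<le> (\<Sum>k\<in>K. w k * cos (t * lam k))"
  shows False
proof -
  define C0 where "C0 = (\<Sum>k\<in>K. if lam k = 0 then w k else 0)"
  obtain M :: nat where M: "C0 / S < real M" using reals_Archimedean2 by blast
  define lj where "lj = lam j"
  have lj_pos: "lj > 0" using lj1 by (simp add: lj_def)
  define P where "P t = (\<Sum>m\<le>M. \<Sum>m'\<le>M. (-1)^(m+m') * cos (t * ((real m - real m') * lj)))" for t
  define g where "g t = (\<Sum>k\<in>K. w k * cos (t * lam k))" for t
  define F where "F t = g t * P t - S * P t" for t
  have Fnn: "F t \<ge> 0" if "t \<ge> 0" for t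
  proof -
    have "F t = (g t - S) * P t" by (simp add: F_def algebra_simps)
    moreover have "g t - S \<ge> 0" using gS that by (simp add: g_def)
    moreover have "P t \<ge> 0" unfolding P_def by (rule fejer_nonneg)
    ultimately show ?thesis by simp
  qed
  have Fexp: "F = (\<lambda>t. (\<Sum>k\<in>K. \<Sum>m\<le>M. \<Sum>m'\<le>M. (w k * (-1)^(m+m') / 2) *
        (cos (t * (lam k - (real m - real m') * lj)) + cos (t * (lam k + (real m - real m') * lj))))
      - (\<Sum>m\<le>M. \<Sum>m'\<le>M. (S * (-1)^(m+m')) * cos (t * ((real m - real m') * lj))))"
  proof
    fix t
    have "g t * P t = (\<Sum>k\<in>K. w k * cos (t * lam k) * P t)"
      by (simp add: g_def sum_distrib_right)
    also have "\<dots> = (\<Sum>k\<in>K. \<Sum>m\<le>M. \<Sum>m'\<le>M. w k * (-1)^(m+m') * (cos (t * lam k) * cos (t * ((real m - real m') * lj))))"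
      by (intro sum.cong refl) (simp add: P_def sum_distrib_left mult_ac)
    also have "\<dots> = (\<Sum>k\<in>K. \<Sum>m\<le>M. \<Sum>m'\<le>M. (w k * (-1)^(m+m') / 2) *
        (cos (t * (lam k - (real m - real m') * lj)) + cos (t * (lam k + (real m - real m') * lj))))"
      by (simp only: cos_prod_split) (simp add: field_simps)
    finally show "F t = (\<Sum>k\<in>K. \<Sum>m\<le>M. \<Sum>m'\<le>M. (w k * (-1)^(m+m') / 2) *
        (cos (t * (lam k - (real m - real m') * lj)) + cos (t * (lam k + (real m - real m') * lj))))
      - (\<Sum>m\<le>M. \<Sum>m'\<le>M. (S * (-1)^(m+m')) * cos (t * ((real m - real m') * lj)))"
      by (simp add: F_def P_def sum_distrib_left mult_ac)
  qed
  define L where "L = (\<Sum>k\<in>K. \<Sum>m\<le>M. \<Sum>m'\<le>M. (w k * (-1)^(m+m') / 2) *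
        ((if lam k - (real m - real m') * lj = 0 then 1 else 0) + (if lam k + (real m - real m') * lj = 0 then 1 else 0)))
      - (\<Sum>m\<le>M. \<Sum>m'\<le>M. (S * (-1)^(m+m')) * (if (real m - real m') * lj = 0 then 1 else 0))"
  have "mean_lim F L"
    unfolding Fexp L_def
    by (intro mean_lim_diff mean_lim_sum mean_lim_cmult mean_lim_add mean_lim_cos fin finite_atMost)
  then have L0: "L \<ge> 0" using Fnn by (rule mean_lim_nonneg)
  have Sterm: "(\<Sum>m\<le>M. \<Sum>m'\<le>M. (S * (-1)^(m+m')) * (if (real m - real m') * lj = 0 then 1 else 0)) = S * Zc M 0"
    unfolding Zc_def using lj_pos by (simp add: sum_distrib_left mult_ac)
  have kterm: "(\<Sum>m\<le>M. \<Sum>m'\<le>M. (w k * (-1)^(m+m') / 2) *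
        ((if lam k - (real m - real m') * lj = 0 then 1 else 0) + (if lam k + (real m - real m') * lj = 0 then 1 else 0)))
       = w k * Zc M (lam k / lj)" for k
  proof -
    have e1: "(lam k - (real m - real m') * lj = 0) = (real m - real m' = lam k / lj)" for m m'
      using lj_pos by (auto simp: field_simps)
    have e2: "(lam k + (real m - real m') * lj = 0) = (real m - real m' = - (lam k / lj))" for m m'
      using lj_pos by (auto simp: field_simps)
    have "(\<Sum>m\<le>M. \<Sum>m'\<le>M. (w k * (-1)^(m+m') / 2) *
        ((if lam k - (real m - real m') * lj = 0 then 1 else 0) + (if lam k + (real m - real m') * lj = 0 then 1 else 0)))
       = w k / 2 * (Zc M (lam k / lj) + Zc M (- (lam k / lj)))"
      unfolding Zc_def e1 e2 by (simp add: sum_distrib_left sum.distrib algebra_simps)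
    then show ?thesis by (simp add: Zc_neg)
  qed
  have V: "Zc M (lam k / lj) = (real M + 1) * (if lam k = 0 then 1 else 0) + (- real M) * (if k = j then 1 else 0)
        + (- real M) * (if k = j' then 1 else 0)" if kK: "k \<in> K" for k
  proof -
    have ljn0: "lam j \<noteq> 0" "lam j' \<noteq> 0" using lj1 lj' by auto
    consider "lam k = 0" | "k = j" | "k = j'" | "lam k \<noteq> 0" "k \<noteq> j" "k \<noteq> j'" by blast
    then show ?thesis
    proof cases
      case 1 then show ?thesis using ljn0 jj' by (auto simp: Zc_0)
    next
      case 2 then show ?thesis using ljn0 jj' lj_pos by (auto simp: Zc_1 lj_def)
    next
      case 3 then show ?thesis using ljn0 jj' lj_pos lj' by (auto simp: Zc_1 Zc_neg lj_def)
    next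
      case 4
      have "Zc M (lam k / lj) = 0"
      proof (rule Zc_none)
        fix m m'
        show "real m - real m' \<noteq> lam k / lj"
        proof
          assume eq: "real m - real m' = lam k / lj"
          then have lk: "lam k = (real m - real m') * lj" using lj_pos by (simp add: field_simps)
          have "\<bar>real m - real m'\<bar> < 2"
          proof -
            have "\<bar>lam k\<bar> < 2" using bound kK by auto
            then have "\<bar>real m - real m'\<bar> * lj < 2" using lk lj_pos by (simp add: abs_mult)
            moreover have "\<bar>real m - real m'\<bar> \<le> \<bar>real m - real m'\<bar> * lj"
              using lj1 by (simp add: lj_def mult_le_cancel_left1)
            ultimately show ?thesis by linarith
          qed
          then have "m = m' \<or> m = m' + 1 \<or> m' = m + 1" by linarith
          then show False
          proof (elim disjE)
            assume "m = m'" then show False using lk 4 by simp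
          next
            assume "m = m' + 1" then have "lam k = lam j" using lk by (simp add: lj_def)
            then show False using inj kK jK 4 by (auto dest: inj_onD)
          next
            assume "m' = m + 1" then have "lam k = lam j'" using lk lj' by (simp add: lj_def)
            then show False using inj kK j'K 4 by (auto dest: inj_onD)
          qed
        qed
      qed
      then show ?thesis using 4 by simp
    qed
  qed
  have "L = (\<Sum>k\<in>K. w k * Zc M (lam k / lj)) - S * Zc M 0"
    unfolding L_def Sterm kterm by simp
  also have "(\<Sum>k\<in>K. w k * Zc M (lam k / lj)) = (\<Sum>k\<in>K. (real M + 1) * (if lam k = 0 then w k else 0)
        + (- real M) * (if k = j then w k else 0) + (- real M) * (if k = j' then w k else 0))"
    by (intro sum.cong refl) (simp add: V algebra_simps)
  also have "\<dots> = (real M + 1) * C0 - real M * w j - real M * w j'"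
    using jK j'K fin by (simp add: sum.distrib sum_subtractf sum_distrib_left[symmetric] C0_def sum.delta)
  finally have "0 \<le> (real M + 1) * C0 - real M * w j - real M * w j' - S * (real M + 1)"
    using L0 by (simp add: Zc_0)
  then have "S * (real M + 1) \<le> C0"
    using C0le wj' by (simp add: C0_def algebra_simps) (smt (verit) mult_left_mono of_nat_0_le_iff)
  moreover have "C0 < S * real M" using M Spos by (simp add: field_simps)
  ultimately show False using Spos by (simp add: algebra_simps)
qed




definition theta :: "nat \<Rightarrow> nat \<Rightarrow> real" where
  "theta n k = pi * real k / real (Suc n)"
definition lamP :: "nat \<Rightarrow> nat \<Rightarrow> real" where
  "lamP n k = 2 * cos (theta n k)"
definition phiP :: "nat \<Rightarrow> nat \<Rightarrow> nat \<Rightarrow> real" where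
  "phiP n k v = sin (theta n k * real (Suc v))"

lemma eig:
  assumes "v < n"
  shows "(\<Sum>l<n. complex_of_real (phiP n k l) * path_adj n l v) = complex_of_real (lamP n k * phiP n k v)"
proof -
  define x where "x = theta n k"
  have "(\<Sum>l<n. complex_of_real (phiP n k l) * path_adj n l v)
      = (\<Sum>l<n. (if l = Suc v then complex_of_real (phiP n k l) else 0)
              + (if l = v - 1 \<and> 0 < v then complex_of_real (phiP n k l) else 0))"
    using assms by (intro sum.cong refl) (auto simp: path_adj_def)
  also have "\<dots> = (if Suc v < n then complex_of_real (phiP n k (Suc v)) else 0)
       + (if 0 < v then complex_of_real (phiP n k (v - 1)) else 0)"
  proof -
    have 1: "(\<Sum>l<n. if l = Suc v then complex_of_real (phiP n k l) else 0) = (if Suc v < n then complex_of_real (phiP n k (Suc v)) else 0)"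
      by (simp add: sum.delta)
    have 2: "(\<Sum>l<n. if l = v - 1 \<and> 0 < v then complex_of_real (phiP n k l) else 0) = (if 0 < v then complex_of_real (phiP n k (v - 1)) else 0)"
    proof (cases v)
      case (Suc q)
      then have "(\<Sum>l<n. if l = v - 1 \<and> 0 < v then complex_of_real (phiP n k l) else 0) = (\<Sum>l<n. if l = q then complex_of_real (phiP n k l) else 0)"
        by simp
      also have "\<dots> = complex_of_real (phiP n k q)" using Suc assms by (simp add: sum.delta)
      finally show ?thesis using Suc by simp
    qed simp
    show ?thesis by (subst sum.distrib) (simp only: 1 2)
  qed
  also have "\<dots> = complex_of_real (sin (x * (real v + 2)) + sin (x * real v))"
  proof -
    have A: "(if Suc v < n then phiP n k (Suc v) else 0) = sin (x * (real v + 2))"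
    proof (cases "Suc v < n")
      case True then show ?thesis by (simp add: phiP_def x_def add.commute)
    next
      case False
      then have "Suc (Suc v) = Suc n" using assms by simp
      then have "real (Suc (Suc v)) = real (Suc n)" by (simp only:)
      then have "real v + 2 = real (Suc n)" by simp
      then have "x * (real v + 2) = x * real (Suc n)" by (simp only:)
      also have "\<dots> = real k * pi" by (simp add: x_def theta_def del: of_nat_Suc)
      finally have "x * (real v + 2) = real k * pi" .
      then show ?thesis using False by (simp add: sin_npi)
    qed
    have B: "(if 0 < v then phiP n k (v - 1) else 0) = sin (x * real v)"
      by (cases v) (auto simp: phiP_def x_def)
    show ?thesis unfolding of_real_add A[symmetric] B[symmetric] by simp
  qed
  also have "sin (x * (real v + 2)) + sin (x * real v) = lamP n k * phiP n k v"
  proof -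
    define a where "a = x * real (Suc v)"
    have e: "x * (real v + 2) = a + x" "x * real v = a - x" by (simp_all add: a_def algebra_simps)
    have "sin (x * (real v + 2)) + sin (x * real v) = 2 * cos x * sin a"
      unfolding e by (simp add: sin_add sin_diff)
    then show ?thesis by (simp add: lamP_def phiP_def x_def a_def)
  qed
  finally show ?thesis .
qed




lemma tele: "2 * sin (y/2) * (\<Sum>j<K. cos (real j * y)) = sin ((2 * real K - 1) * y / 2) + sin (y/2)"
proof (induction K)
  case 0 then show ?case by simp
next
  case (Suc K)
  have e1: "(2 * real (Suc K) - 1) * y / 2 = real K * y + y/2" by (simp add: algebra_simps)
  have e2: "(2 * real K - 1) * y / 2 = real K * y - y/2" by (simp add: field_simps)
  have "2 * sin (y/2) * (\<Sum>j<Suc K. cos (real j * y)) = 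
        (sin ((2 * real K - 1) * y / 2) + sin (y/2)) + 2 * sin (y/2) * cos (real K * y)"
    using Suc by (simp add: algebra_simps)
  also have "\<dots> = sin ((2 * real (Suc K) - 1) * y / 2) + sin (y/2)"
    unfolding e1 e2 by (simp add: sin_add sin_diff algebra_simps)
  finally show ?case .
qed

lemma cos_sum_N:
  fixes m N :: nat
  assumes "0 < m" "m < 2 * N"
  shows "(\<Sum>j<N. cos (real j * (pi * real m / real N))) = (1 - (-1)^m) / 2"
proof -
  define y where "y = pi * real m / real N"
  have N0: "N > 0" using assms by simp
  have "0 < y/2" using assms N0 by (simp add: y_def)
  moreover have "y/2 < pi"
  proof -
    have "real m < 2 * real N" using assms by linarith
    then have "pi * real m < pi * (2 * real N)" by simp
    then show ?thesis using N0 by (simp add: y_def field_simps)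
  qed
  ultimately have sp: "sin (y/2) > 0" by (rule sin_gt_zero)
  have h: "(2 * real N - 1) * y / 2 = pi * real m - y/2"
    using N0 by (simp add: y_def field_simps)
  have "sin (pi * real m - y/2) = - ((-1)^m) * sin (y/2)"
    by (simp add: sin_diff sin_npi2 cos_npi2)
  then have "sin ((2 * real N - 1) * y / 2) = - ((-1)^m) * sin (y/2)"
    by (simp only: h)
  then have "2 * sin (y/2) * (\<Sum>j<N. cos (real j * y)) = sin (y/2) * (1 - (-1)^m)"
    using tele[of y N] by (simp add: algebra_simps)
  then have "sin (y/2) * (2 * (\<Sum>j<N. cos (real j * y)) - (1 - (-1)^m)) = 0"
    by (simp add: algebra_simps)
  then have "2 * (\<Sum>j<N. cos (real j * y)) - (1 - (-1)^m) = 0" using sp by simp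
  then have "(\<Sum>j<N. cos (real j * y)) = (1 - (-1)^m) / 2" by simp
  then show ?thesis by (simp add: y_def)
qed

lemma sinsum:
  fixes a b N :: nat
  assumes "1 \<le> a" "a < N" "1 \<le> b" "b < N"
  shows "(\<Sum>j<N. sin (real j * (pi * real a / real N)) * sin (real j * (pi * real b / real N)))
         = (if a = b then real N / 2 else 0)"
proof -
  have sum_eq: "(\<Sum>j<N. sin (real j * (pi * real a / real N)) * sin (real j * (pi * real b / real N)))
      = ((\<Sum>j<N. cos (real j * (pi * (real a - real b) / real N))) - (\<Sum>j<N. cos (real j * (pi * real (a + b) / real N)))) / 2"
  proof -
    have t: "sin (real j * (pi * real a / real N)) * sin (real j * (pi * real b / real N))
       = (cos (real j * (pi * (real a - real b) / real N)) - cos (real j * (pi * real (a + b) / real N))) / 2" for j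
    proof -
      have Np: "real N > 0" using assms by simp
      have 1: "real j * (pi * (real a - real b) / real N) = real j * (pi * real a / real N) - real j * (pi * real b / real N)"
        using Np by (simp add: field_simps)
      have 2: "real j * (pi * real (a + b) / real N) = real j * (pi * real a / real N) + real j * (pi * real b / real N)"
        using Np by (simp add: field_simps)
      show ?thesis by (simp only: 1 2 sin_times_sin)
    qed
    show ?thesis by (simp only: t sum_divide_distrib[symmetric] sum_subtractf)
  qed
  have plus: "(\<Sum>j<N. cos (real j * (pi * real (a + b) / real N))) = (1 - (-1)^(a+b)) / 2"
    using assms by (intro cos_sum_N) auto
  consider "a = b" | "b < a" | "a < b" by linarith
  then show ?thesis
  proof cases
    case 1
    have "(-1::real)^(a+b) = 1" using 1 by (simp add: mult_2[symmetric])
    then show ?thesis using 1 sum_eq plus by simp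
  next
    case 2
    have "(\<Sum>j<N. cos (real j * (pi * (real a - real b) / real N))) = (\<Sum>j<N. cos (real j * (pi * real (a - b) / real N)))"
      using 2 by (simp add: of_nat_diff)
    also have "\<dots> = (1 - (-1)^(a-b)) / 2" using 2 assms by (intro cos_sum_N) auto
    also have "(-1::real)^(a-b) = (-1)^(a+b)"
    proof -
      have h: "a + b = (a - b) + 2 * b" using 2 by simp
      have "(-1::real)^(a+b) = (-1)^((a - b) + 2 * b)" by (simp only: h)
      also have "\<dots> = (-1)^(a - b)" by (simp add: power_add power_mult)
      finally show ?thesis by simp
    qed
    finally show ?thesis using 2 sum_eq plus by simp
  next
    case 3
    have "(\<Sum>j<N. cos (real j * (pi * (real a - real b) / real N))) = (\<Sum>j<N. cos (real j * (pi * real (b - a) / real N)))"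
    proof (intro sum.cong refl)
      fix j
      have "real j * (pi * (real a - real b) / real N) = - (real j * (pi * real (b - a) / real N))"
        using 3 by (simp add: of_nat_diff algebra_simps minus_divide_left)
      then show "cos (real j * (pi * (real a - real b) / real N)) = cos (real j * (pi * real (b - a) / real N))"
        by simp
    qed
    also have "\<dots> = (1 - (-1)^(b-a)) / 2" using 3 assms by (intro cos_sum_N) auto
    also have "(-1::real)^(b-a) = (-1)^(a+b)"
    proof -
      have h: "a + b = (b - a) + 2 * a" using 3 by simp
      have "(-1::real)^(a+b) = (-1)^((b - a) + 2 * a)" by (simp only: h)
      also have "\<dots> = (-1)^(b - a)" by (simp add: power_add power_mult)
      finally show ?thesis by simp
    qed
    finally show ?thesis using 3 sum_eq plus by simp
  qed
qed




lemma compl: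
  assumes "u < n" "v < n"
  shows "(\<Sum>j\<in>{1..n}. phiP n j u * phiP n j v) = (if u = v then real (Suc n) / 2 else 0)"
proof -
  have e: "phiP n j w = sin (real j * (pi * real (Suc w) / real (Suc n)))" for j w
    by (simp add: phiP_def theta_def algebra_simps)
  have "{..<Suc n} = insert 0 {1..n}" by auto
  then have "(\<Sum>j<Suc n. phiP n j u * phiP n j v) = (\<Sum>j\<in>{1..n}. phiP n j u * phiP n j v)"
    by (simp add: phiP_def theta_def)
  moreover have "(\<Sum>j<Suc n. phiP n j u * phiP n j v) = (if Suc u = Suc v then real (Suc n) / 2 else 0)"
    unfolding e using assms by (intro sinsum) auto
  ultimately show ?thesis by simp
qed

lemma spectral:
  assumes "u < n" "v < n"
  shows "mat_pow n (path_adj n) k u v =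
    (\<Sum>j\<in>{1..n}. complex_of_real (2 / real (Suc n) * lamP n j ^ k * phiP n j u) * complex_of_real (phiP n j v))"
  using assms(2)
proof (induction k arbitrary: v)
  case 0
  have "(\<Sum>j\<in>{1..n}. complex_of_real (2 / real (Suc n) * lamP n j ^ 0 * phiP n j u) * complex_of_real (phiP n j v))
      = complex_of_real (2 / real (Suc n) * (\<Sum>j\<in>{1..n}. phiP n j u * phiP n j v))"
    by (simp add: sum_distrib_left mult_ac)
  also have "\<dots> = complex_of_real (2 / real (Suc n) * (if u = v then real (Suc n) / 2 else 0))"
    by (simp only: compl[OF assms(1) 0])
  also have "\<dots> = (if u = v then 1 else 0)"
    by (simp del: of_nat_Suc)
  finally show ?case by simp
next
  case (Suc k)
  have "mat_pow n (path_adj n) (Suc k) u v = (\<Sum>l<n. mat_pow n (path_adj n) k u l * path_adj n l v)"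
    by simp
  also have "\<dots> = (\<Sum>l<n. (\<Sum>j\<in>{1..n}. complex_of_real (2 / real (Suc n) * lamP n j ^ k * phiP n j u) * complex_of_real (phiP n j l)) * path_adj n l v)"
    using Suc.IH by (intro sum.cong refl) auto
  also have "\<dots> = (\<Sum>j\<in>{1..n}. complex_of_real (2 / real (Suc n) * lamP n j ^ k * phiP n j u) * (\<Sum>l<n. complex_of_real (phiP n j l) * path_adj n l v))"
  proof -
    have "(\<Sum>l<n. (\<Sum>j\<in>{1..n}. complex_of_real (2 / real (Suc n) * lamP n j ^ k * phiP n j u) * complex_of_real (phiP n j l)) * path_adj n l v)
       = (\<Sum>l<n. \<Sum>j\<in>{1..n}. complex_of_real (2 / real (Suc n) * lamP n j ^ k * phiP n j u) * (complex_of_real (phiP n j l) * path_adj n l v))"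
      by (simp only: sum_distrib_right mult.assoc)
    also have "\<dots> = (\<Sum>j\<in>{1..n}. \<Sum>l<n. complex_of_real (2 / real (Suc n) * lamP n j ^ k * phiP n j u) * (complex_of_real (phiP n j l) * path_adj n l v))"
      by (rule sum.swap)
    also have "\<dots> = (\<Sum>j\<in>{1..n}. complex_of_real (2 / real (Suc n) * lamP n j ^ k * phiP n j u) * (\<Sum>l<n. complex_of_real (phiP n j l) * path_adj n l v))"
      by (simp only: sum_distrib_left)
    finally show ?thesis .
  qed
  also have "\<dots> = (\<Sum>j\<in>{1..n}. complex_of_real (2 / real (Suc n) * lamP n j ^ k * phiP n j u) * complex_of_real (lamP n j * phiP n j v))"
    using Suc.prems by (simp add: eig)
  also have "\<dots> = (\<Sum>j\<in>{1..n}. complex_of_real (2 / real (Suc n) * lamP n j ^ Suc k * phiP n j u) * complex_of_real (phiP n j v))"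
    by (intro sum.cong refl) (simp add: mult_ac)
  finally show ?case .
qed




definition wP :: "nat \<Rightarrow> nat \<Rightarrow> nat \<Rightarrow> real" where
  "wP n u j = 2 / real (Suc n) * (phiP n j u)^2"

lemma exp_sums: "(\<lambda>k. z^k / of_nat (fact k)) sums exp (z::complex)"
  using exp_converges[of z] by (simp add: scaleR_conv_of_real divide_inverse mult.commute)

lemma trans_formula:
  assumes "u < n"
  shows "transition n (path_adj n) t u u = (\<Sum>j\<in>{1..n}. complex_of_real (wP n u j) * exp (\<i> * complex_of_real (t * lamP n j)))"
proof -
  have tm: "((\<i> * of_real t) ^ k / of_nat (fact k)) * mat_pow n (path_adj n) k u u
      = (\<Sum>j\<in>{1..n}. complex_of_real (wP n u j) * ((\<i> * complex_of_real (t * lamP n j)) ^ k / of_nat (fact k)))" for k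
    unfolding spectral[OF assms assms] sum_distrib_left
    by (intro sum.cong refl) (simp add: wP_def power_mult_distrib power2_eq_square mult_ac)
  have "(\<lambda>k. \<Sum>j\<in>{1..n}. complex_of_real (wP n u j) * ((\<i> * complex_of_real (t * lamP n j)) ^ k / of_nat (fact k)))
     sums (\<Sum>j\<in>{1..n}. complex_of_real (wP n u j) * exp (\<i> * complex_of_real (t * lamP n j)))"
    by (intro sums_sum sums_mult exp_sums)
  then show ?thesis
    unfolding transition_def tm by (simp add: sums_iff)
qed

lemma lam_refl: "j \<le> Suc n \<Longrightarrow> lamP n (Suc n - j) = - lamP n j"
proof -
  assume j: "j \<le> Suc n"
  have "theta n (Suc n - j) = pi - theta n j"
    using j by (simp add: theta_def of_nat_diff field_simps del: of_nat_Suc)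
  then show ?thesis by (simp add: lamP_def)
qed

lemma w_refl: "j \<le> Suc n \<Longrightarrow> wP n u (Suc n - j) = wP n u j"
proof -
  assume j: "j \<le> Suc n"
  have h: "theta n (Suc n - j) = pi - theta n j"
    using j by (simp add: theta_def of_nat_diff field_simps del: of_nat_Suc)
  have "theta n (Suc n - j) * real (Suc u) = pi * real (Suc u) - theta n j * real (Suc u)"
    unfolding h by (rule left_diff_distrib)
  then have "phiP n (Suc n - j) u = - ((-1)^(Suc u)) * phiP n j u"
    unfolding phiP_def by (simp only:) (simp add: sin_diff sin_npi2 cos_npi2 del: of_nat_Suc)
  moreover have "((-1::real)^u)\<^sup>2 = 1" by (simp add: power_even_eq[symmetric] power_mult[symmetric] mult.commute)
  ultimately show ?thesis by (simp add: wP_def power_mult_distrib)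
qed

lemma im_zero: "(\<Sum>j\<in>{1..n}. wP n u j * sin (t * lamP n j)) = 0"
proof -
  have "(\<Sum>j\<in>{1..n}. wP n u j * sin (t * lamP n j)) = (\<Sum>j\<in>{1..n}. wP n u (n + 1 - j) * sin (t * lamP n (n + 1 - j)))"
    by (rule sum.atLeastAtMost_rev)
  also have "\<dots> = (\<Sum>j\<in>{1..n}. - (wP n u j * sin (t * lamP n j)))"
    by (intro sum.cong refl) (simp add: lam_refl w_refl)
  finally show ?thesis by (simp add: sum_negf)
qed

lemma trans_real:
  assumes "u < n"
  shows "transition n (path_adj n) t u u = complex_of_real (\<Sum>j\<in>{1..n}. wP n u j * cos (t * lamP n j))"
proof -
  have "Im (transition n (path_adj n) t u u) = (\<Sum>j\<in>{1..n}. wP n u j * sin (t * lamP n j))"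
    unfolding trans_formula[OF assms] by (simp add: Im_exp Re_exp)
  moreover have "Re (transition n (path_adj n) t u u) = (\<Sum>j\<in>{1..n}. wP n u j * cos (t * lamP n j))"
    unfolding trans_formula[OF assms] by (simp add: Im_exp Re_exp)
  ultimately show ?thesis using im_zero by (intro complex_eqI) auto
qed


lemma theta_range: "1 \<le> k \<Longrightarrow> k \<le> n \<Longrightarrow> 0 < theta n k \<and> theta n k < pi"
proof -
  assume k: "1 \<le> k" "k \<le> n"
  have N: "0 < real (Suc n)" by simp
  have "real k < real (Suc n)" using k by simp
  then have "pi * real k < pi * real (Suc n)" by simp
  then have "theta n k < pi" unfolding theta_def using N by (simp add: pos_divide_less_eq mult.commute)
  moreover have "0 < theta n k" unfolding theta_def using k by simp
  ultimately show ?thesis by simp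
qed

lemma lam_bound: "k \<in> {1..n} \<Longrightarrow> \<bar>lamP n k\<bar> < 2"
proof -
  assume k: "k \<in> {1..n}"
  then have "0 < theta n k" "theta n k < pi" using theta_range[of k n] by auto
  then have "sin (theta n k) > 0" by (rule sin_gt_zero)
  then have "(sin (theta n k))\<^sup>2 > 0" by simp
  then have "(cos (theta n k))\<^sup>2 < 1" using sin_cos_squared_add[of "theta n k"] by linarith
  then have "\<bar>cos (theta n k)\<bar> < 1" by (simp add: abs_square_less_1)
  then show ?thesis by (simp add: lamP_def)
qed

lemma lam_inj: "inj_on (lamP n) {1..n}"
proof (rule inj_onI)
  fix k l assume k: "k \<in> {1..n}" and l: "l \<in> {1..n}" and eq: "lamP n k = lamP n l"
  have r: "0 < theta n k" "theta n k < pi" "0 < theta n l" "theta n l < pi"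
    using theta_range[of k n] theta_range[of l n] k l by auto
  have c: "cos (theta n k) = cos (theta n l)" using eq by (simp add: lamP_def)
  have "theta n k = theta n l"
    apply (rule cos_inj_pi) using r c by linarith+
  then show "k = l" by (simp add: theta_def del: of_nat_Suc)
qed

lemma lam_zero: "k \<in> {1..n} \<Longrightarrow> lamP n k = 0 \<Longrightarrow> 2 * k = Suc n"
proof -
  assume k: "k \<in> {1..n}" and z: "lamP n k = 0"
  have r: "0 < theta n k" "theta n k < pi"
    using theta_range[of k n] k by auto
  have c: "cos (theta n k) = cos (pi / 2)" using z by (simp add: lamP_def)
  have "theta n k = pi / 2"
    apply (rule cos_inj_pi) using r c pi_gt_zero by linarith+
  then have "real k * 2 = real (Suc n)" by (simp add: theta_def field_simps del: of_nat_Suc)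
  then have "real (2 * k) = real (Suc n)" by simp
  then show ?thesis by (simp only: of_nat_eq_iff)
qed

lemma lam_ge1: "1 \<le> j \<Longrightarrow> 3 * j \<le> Suc n \<Longrightarrow> lamP n j \<ge> 1"
proof -
  assume j: "1 \<le> j" "3 * j \<le> Suc n"
  have "theta n j \<le> pi / 3"
  proof -
    have "real (3 * j) \<le> real (Suc n)" using j by (simp only: of_nat_le_iff)
    then have "3 * real j \<le> real (Suc n)" by simp
    then have "pi * (3 * real j) \<le> pi * real (Suc n)" by simp
    then show ?thesis by (simp add: theta_def field_simps del: of_nat_Suc)
  qed
  moreover have "0 \<le> theta n j" by (simp add: theta_def)
  ultimately have "cos (pi / 3) \<le> cos (theta n j)" using pi_gt_zero by (intro cos_monotone_0_pi_le) (linarith+)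
  then show ?thesis by (simp add: lamP_def cos_60)
qed



lemma choose_j:
  fixes N b :: nat
  assumes "even N" "4 \<le> N" "1 \<le> b" "2 * b \<le> N"
  obtains j where "1 \<le> j" "3 * j \<le> N" "N \<le> 4 * (j * b)" "4 * (j * b) \<le> 3 * N"
proof (cases "N \<le> 4 * b")
  case True
  then show ?thesis using assms by (intro that[of 1]) auto
next
  case False
  define j where "j = (LEAST j. N \<le> 4 * (j * b))"
  have ex: "N \<le> 4 * (N * b)" using assms by simp
  have j1: "N \<le> 4 * (j * b)" unfolding j_def by (rule LeastI[of _ N]) (rule ex)
  have "j \<noteq> 0"
  proof
    assume "j = 0" then show False using j1 assms by simp
  qed
  then obtain i where i: "j = Suc i" by (cases j) auto
  have "i < j" using i by simp
  then have "\<not> N \<le> 4 * (i * b)" unfolding j_def by (rule not_less_Least)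
  then have lt: "4 * (i * b) < N" by simp
  have "i \<le> i * b" using assms by simp
  then have "4 * i < N" using lt by linarith
  then have "4 * j < N + 4" using i by simp
  then have "3 * j \<le> N" using assms(1,2) by presburger
  moreover have "4 * (j * b) \<le> 3 * N" using lt i False by simp
  moreover have "1 \<le> j" using i by simp
  ultimately show ?thesis using j1 by (intro that[of j])
qed


lemma sin_sq_ge:
  fixes x :: real
  assumes "pi / 4 \<le> x" "x \<le> 3 * pi / 4"
  shows "(sin x)\<^sup>2 \<ge> 1/2"
proof -
  have p: "0 < pi" by simp
  have c1: "cos x \<le> cos (pi/4)" using assms p by (intro cos_monotone_0_pi_le) (linarith+)
  have "cos (3 * pi / 4) \<le> cos x" using assms p by (intro cos_monotone_0_pi_le) (linarith+)
  moreover have "cos (3 * pi / 4) = - cos (pi / 4)"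
  proof -
    have "3 * pi / 4 = pi - pi / 4" by linarith
    then have "cos (3 * pi / 4) = cos (pi - pi / 4)" by (rule arg_cong)
    then show ?thesis by (simp only: cos_pi_minus)
  qed
  ultimately have "\<bar>cos x\<bar> \<le> sqrt 2 / 2" using c1 by (simp add: cos_45)
  then have "\<bar>cos x\<bar>\<^sup>2 \<le> (sqrt 2 / 2)\<^sup>2" by (rule power_mono) simp
  then have "(cos x)\<^sup>2 \<le> (sqrt 2 / 2)\<^sup>2" by simp
  then have "(cos x)\<^sup>2 \<le> 1/2" by (simp add: power_divide)
  then show ?thesis using sin_cos_squared_add[of x] by linarith
qed

lemma sin_sq_bound:
  fixes j b n :: nat
  assumes "Suc n \<le> 4 * (j * b)" "4 * (j * b) \<le> 3 * Suc n"
  shows "(sin (theta n j * real b))\<^sup>2 \<ge> 1/2"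
proof -
  define N where "N = real (Suc n)"
  have Np: "N > 0" by (simp add: N_def)
  have x: "theta n j * real b = pi * real (j * b) / N" by (simp add: theta_def N_def)
  have a1: "N \<le> 4 * real (j * b)" using assms(1) unfolding N_def by (metis of_nat_le_iff of_nat_mult of_nat_numeral)
  have a2: "4 * real (j * b) \<le> 3 * N" using assms(2) unfolding N_def by (metis of_nat_le_iff of_nat_mult of_nat_numeral)
  have "pi * N \<le> pi * (4 * real (j * b))" using a1 by (intro mult_left_mono) simp_all
  then have l: "pi / 4 \<le> pi * real (j * b) / N" using Np by (simp add: field_simps)
  have "pi * (4 * real (j * b)) \<le> pi * (3 * N)" using a2 by (intro mult_left_mono) simp_all
  then have u: "pi * real (j * b) / N \<le> 3 * pi / 4" using Np by (simp add: field_simps)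
  show ?thesis unfolding x using l u by (rule sin_sq_ge)
qed

lemma sin_sq_refl:
  fixes j b n :: nat
  assumes "b \<le> Suc n"
  shows "(sin (theta n j * real (Suc n - b)))\<^sup>2 = (sin (theta n j * real b))\<^sup>2"
proof -
  have "theta n j * real (Suc n - b) = pi * real j - theta n j * real b"
    using assms by (simp add: theta_def of_nat_diff field_simps del: of_nat_Suc)
  then have "sin (theta n j * real (Suc n - b)) = - ((-1)^j) * sin (theta n j * real b)"
    by (simp add: sin_diff sin_npi2 cos_npi2)
  moreover have "((-1::real)^j)\<^sup>2 = 1" by (simp add: power_even_eq[symmetric] power_mult[symmetric] mult.commute)
  ultimately show ?thesis by (simp add: power_mult_distrib)
qed

theorem theorem43:
  fixes n u :: nat
  assumes "n \<ge> 3" and "u < n"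
  shows "\<not> sedentary n (path_adj n) u \<and>
         (INF t\<in>{0<..}. norm (transition n (path_adj n) t u u)) = 0"
proof -
  define g where "g t = (\<Sum>j\<in>{1..n}. wP n u j * cos (t * lamP n j))" for t
  have tr: "norm (transition n (path_adj n) t u u) = \<bar>g t\<bar>" for t
    unfolding trans_real[OF assms(2), of t] g_def by (rule norm_of_real)
  have wnn: "wP n u j \<ge> 0" for j by (simp add: wP_def)
  have wsum: "(\<Sum>j\<in>{1..n}. wP n u j) = 1"
  proof -
    have "(\<Sum>j\<in>{1..n}. wP n u j) = 2 / real (Suc n) * (\<Sum>j\<in>{1..n}. phiP n j u * phiP n j u)"
      by (simp add: wP_def sum_distrib_left power2_eq_square)
    also have "\<dots> = 1" using compl[OF assms(2) assms(2)] by (simp del: of_nat_Suc)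
    finally show ?thesis .
  qed
  have g0: "g 0 = 1" unfolding g_def using wsum by simp
  have gle1: "\<bar>g t\<bar> \<le> 1" for t
  proof -
    have "\<bar>g t\<bar> \<le> (\<Sum>j\<in>{1..n}. \<bar>wP n u j * cos (t * lamP n j)\<bar>)" unfolding g_def by (rule sum_abs)
    also have "\<dots> \<le> (\<Sum>j\<in>{1..n}. wP n u j)"
    proof (rule sum_mono)
      fix j
      have "\<bar>wP n u j * cos (t * lamP n j)\<bar> = wP n u j * \<bar>cos (t * lamP n j)\<bar>" using wnn[of j] by (simp add: abs_mult)
      also have "\<dots> \<le> wP n u j * 1" using wnn[of j] by (intro mult_left_mono) auto
      finally show "\<bar>wP n u j * cos (t * lamP n j)\<bar> \<le> wP n u j" by simp
    qed
    finally show ?thesis using wsum by simp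
  qed
  have gcont: "continuous_on A g" for A unfolding g_def by (intro continuous_intros)
  define S where "S = (INF t\<in>{0<..}. norm (transition n (path_adj n) t u u))"
  have bdd: "bdd_below ((\<lambda>t. norm (transition n (path_adj n) t u u)) ` {0<..})"
    by (intro bdd_belowI[of _ 0]) auto
  have S0: "S \<ge> 0" unfolding S_def
    by (rule cINF_greatest) (auto intro: exI[of _ 1])
  have Sle: "S \<le> \<bar>g t\<bar>" if "t > 0" for t
    unfolding S_def tr[symmetric] using that by (intro cINF_lower bdd) auto
  have "S = 0"
  proof (rule ccontr)
    assume "S \<noteq> 0"
    then have Spos: "S > 0" using S0 by simp
    have gpos: "g t > 0" if t: "t > 0" for t
    proof (rule ccontr)
      assume "\<not> g t > 0"
      then have "g t \<le> 0" by simp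
      then obtain x where x: "0 \<le> x" "x \<le> t" "g x = 0"
        using IVT2'[of g t 0 0] g0 t gcont by auto
      then have "x \<noteq> 0" using g0 by auto
      then have "S \<le> \<bar>g x\<bar>" using x by (intro Sle) auto
      then show False using x Spos by simp
    qed
    have gS: "\<forall>t\<ge>0. S \<le> (\<Sum>k\<in>{1..n}. wP n u k * cos (t * lamP n k))"
    proof (intro allI impI)
      fix t :: real assume t: "t \<ge> 0"
      show "S \<le> (\<Sum>k\<in>{1..n}. wP n u k * cos (t * lamP n k))"
      proof (cases "t = 0")
        case True
        have "S \<le> \<bar>g 1\<bar>" by (intro Sle) simp
        then show ?thesis using gle1[of 1] g0 True by (simp add: g_def)
      next
        case False
        then have "t > 0" using t by simp
        then show ?thesis using Sle[of t] gpos[of t] by (simp add: g_def)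
      qed
    qed
    have C0bound: "(\<Sum>k\<in>{1..n}. if lamP n k = 0 then wP n u k else 0) \<le> 2 / real (Suc n)"
    proof -
      have "(\<Sum>k\<in>{1..n}. if lamP n k = 0 then wP n u k else 0) \<le> (\<Sum>k\<in>{1..n}. if k = Suc n div 2 then 2 / real (Suc n) else 0)"
      proof (rule sum_mono)
        fix k assume k: "k \<in> {1..n}"
        show "(if lamP n k = 0 then wP n u k else 0) \<le> (if k = Suc n div 2 then 2 / real (Suc n) else 0)"
        proof (cases "lamP n k = 0")
          case True
          then have "2 * k = Suc n" using lam_zero k by blast
          then have "k = Suc n div 2" by simp
          moreover have "wP n u k \<le> 2 / real (Suc n)"
          proof -
            have "(phiP n k u)\<^sup>2 \<le> 1" unfolding phiP_def by (simp add: abs_square_le_1)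
            then have "2 / real (Suc n) * (phiP n k u)\<^sup>2 \<le> 2 / real (Suc n) * 1"
              by (intro mult_left_mono) auto
            then show ?thesis unfolding wP_def by simp
          qed
          ultimately show ?thesis using True by simp
        qed simp
      qed
      also have "\<dots> \<le> 2 / real (Suc n)" by (simp add: sum.delta)
      finally show ?thesis .
    qed
    show False
    proof (cases "even (Suc n)")
      case False
      have C0: "(\<Sum>k\<in>{1..n}. if lamP n k = 0 then wP n u k else 0) = 0"
      proof (intro sum.neutral ballI)
        fix k assume k: "k \<in> {1..n}"
        have "lamP n k \<noteq> 0"
        proof
          assume "lamP n k = 0"
          then have "2 * k = Suc n" using lam_zero k by blast
          then show False using False by presburger
        qed
        then show "(if lamP n k = 0 then wP n u k else 0) = 0" by simp
      qed
      show False
      proof (rule key[of "{1..n}" 1 n "lamP n" "wP n u" S])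
        show "finite {1..n}" by simp
        show "1 \<in> {1..n}" "n \<in> {1..n}" "1 \<noteq> n" using assms by auto
        show "lamP n 1 \<ge> 1" using assms by (intro lam_ge1) auto
        show "lamP n n = - lamP n 1" using lam_refl[of 1 n] by simp
        show "wP n u n = wP n u 1" using w_refl[of 1 n u] by simp
        show "inj_on (lamP n) {1..n}" by (rule lam_inj)
        show "\<forall>k\<in>{1..n}. \<bar>lamP n k\<bar> < 2" using lam_bound by blast
        show "(\<Sum>k\<in>{1..n}. if lamP n k = 0 then wP n u k else 0) \<le> 2 * wP n u 1"
          using C0 wnn[of 1] by simp
        show "S > 0" by (rule Spos)
        show "\<forall>t\<ge>0. S \<le> (\<Sum>k\<in>{1..n}. wP n u k * cos (t * lamP n k))" by (rule gS)
      qed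
    next
      case True
      define a where "a = Suc u"
      have a: "1 \<le> a" "a \<le> n" using assms by (auto simp: a_def)
      define b where "b = (if 2 * a \<le> Suc n then a else Suc n - a)"
      have b: "1 \<le> b" "2 * b \<le> Suc n" using a by (auto simp: b_def)
      obtain j where j: "1 \<le> j" "3 * j \<le> Suc n" "Suc n \<le> 4 * (j * b)" "4 * (j * b) \<le> 3 * Suc n"
        using choose_j[OF True _ b] assms by auto
      have sq_b: "(sin (theta n j * real b))\<^sup>2 \<ge> 1/2" using j by (intro sin_sq_bound) auto
      have sq_a: "(sin (theta n j * real a))\<^sup>2 \<ge> 1/2"
      proof (cases "2 * a \<le> Suc n")
        case True then show ?thesis using sq_b by (simp add: b_def)
      next
        case False
        then have "b = Suc n - a" by (simp add: b_def)
        moreover have "a = Suc n - (Suc n - a)" using a by simp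
        ultimately have "(sin (theta n j * real a))\<^sup>2 = (sin (theta n j * real (Suc n - b)))\<^sup>2" by simp
        also have "\<dots> = (sin (theta n j * real b))\<^sup>2" using b by (intro sin_sq_refl) simp
        finally show ?thesis using sq_b by simp
      qed
      have wj: "wP n u j \<ge> 1 / real (Suc n)"
      proof -
        have "wP n u j = 2 / real (Suc n) * (sin (theta n j * real a))\<^sup>2"
          by (simp add: wP_def phiP_def a_def)
        also have "\<dots> \<ge> 2 / real (Suc n) * (1/2)" using sq_a by (intro mult_left_mono) auto
        also have "2 / real (Suc n) * (1/2) = 1 / real (Suc n)" by (simp add: field_simps)
        finally show ?thesis .
      qed
      show False
      proof (rule key[of "{1..n}" j "Suc n - j" "lamP n" "wP n u" S])
        show "finite {1..n}" by simp
        show "j \<in> {1..n}" "Suc n - j \<in> {1..n}" "j \<noteq> Suc n - j" using j by auto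
        show "lamP n j \<ge> 1" using j by (intro lam_ge1) auto
        show "lamP n (Suc n - j) = - lamP n j" using j by (intro lam_refl) auto
        show "wP n u (Suc n - j) = wP n u j" using j by (intro w_refl) auto
        show "inj_on (lamP n) {1..n}" by (rule lam_inj)
        show "\<forall>k\<in>{1..n}. \<bar>lamP n k\<bar> < 2" using lam_bound by blast
        show "(\<Sum>k\<in>{1..n}. if lamP n k = 0 then wP n u k else 0) \<le> 2 * wP n u j"
          using C0bound wj by simp
        show "S > 0" by (rule Spos)
        show "\<forall>t\<ge>0. S \<le> (\<Sum>k\<in>{1..n}. wP n u k * cos (t * lamP n k))" by (rule gS)
      qed
    qed
  qed
  moreover have "\<not> sedentary n (path_adj n) u"
    unfolding sedentary_def S_def[symmetric] using \<open>S = 0\<close> by auto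
  ultimately show ?thesis unfolding S_def by simp
qed

end
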